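(* Let $G$ be a connected graph with $n\ge2$ vertices, $m$ edges, maximum degree $\Delta$ and minimum degree $\delta$, and assume $\gamma_n=0$. Then: if $G$ is not regular, $$QE(G)\ >\ \frac{2m+\frac12(\Delta-\delta)^2}{2\Delta-\frac{2m}{n}};$$ and if $G$ is regular, $QE(G)\ge n$, with equality if and only if $G\cong K_{\frac n2,\frac n2}$.
   Context: All graphs are finite, simple and undirected. For a graph $G$ with $n$ vertices and $m$ edges, let $q_1\ge\cdots\ge q_n\ge0$ be the eigenvalues of the signless Laplacian $Q(G)=D(G)+A(G)$ ($D(G)$ the diagonal degree matrix, $A(G)$ the adjacency matrix). The signless Laplacian energy is $QE(G)=\sum_{i=1}^n|q_i-\frac{2m}{n}|$. Let $\gamma_1\ge\gamma_2\ge\cdots\ge\gamma_n\ge0$ denote the numbers $|q_i-\frac{2m}{n}|$, $i=1,\dots,n$, arranged in nonincreasing order. *)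

theory Defs
  imports "Jordan_Normal_Form.Char_Poly"
begin

definition simple_graph :: "nat \<Rightarrow> (nat \<Rightarrow> nat \<Rightarrow> bool) \<Rightarrow> bool" where
  "simple_graph n E \<longleftrightarrow> (\<forall>u v. E u v \<longrightarrow> u < n \<and> v < n \<and> u \<noteq> v \<and> E v u)"

definition degree :: "nat \<Rightarrow> (nat \<Rightarrow> nat \<Rightarrow> bool) \<Rightarrow> nat \<Rightarrow> nat" where
  "degree n E u = card {v. v < n \<and> E u v}"

definition num_edges :: "nat \<Rightarrow> (nat \<Rightarrow> nat \<Rightarrow> bool) \<Rightarrow> nat" where
  "num_edges n E = card {{u, v} | u v. u < n \<and> v < n \<and> E u v}"

definition max_degree :: "nat \<Rightarrow> (nat \<Rightarrow> nat \<Rightarrow> bool) \<Rightarrow> nat" where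
  "max_degree n E = Max (degree n E ` {0..<n})"

definition min_degree :: "nat \<Rightarrow> (nat \<Rightarrow> nat \<Rightarrow> bool) \<Rightarrow> nat" where
  "min_degree n E = Min (degree n E ` {0..<n})"

definition regular :: "nat \<Rightarrow> (nat \<Rightarrow> nat \<Rightarrow> bool) \<Rightarrow> bool" where
  "regular n E \<longleftrightarrow> (\<forall>u<n. \<forall>v<n. degree n E u = degree n E v)"

definition connected_graph :: "nat \<Rightarrow> (nat \<Rightarrow> nat \<Rightarrow> bool) \<Rightarrow> bool" where
  "connected_graph n E \<longleftrightarrow> (\<forall>u<n. \<forall>v<n. E\<^sup>*\<^sup>* u v)"

definition graph_iso :: "nat \<Rightarrow> (nat \<Rightarrow> nat \<Rightarrow> bool) \<Rightarrow> (nat \<Rightarrow> nat \<Rightarrow> bool) \<Rightarrow> bool" where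
  "graph_iso n E F \<longleftrightarrow> (\<exists>f. bij_betw f {0..<n} {0..<n} \<and>
      (\<forall>u<n. \<forall>v<n. E u v \<longleftrightarrow> F (f u) (f v)))"

definition complete_bipartite :: "nat \<Rightarrow> nat \<Rightarrow> nat \<Rightarrow> nat \<Rightarrow> bool" where
  "complete_bipartite a b u v \<longleftrightarrow> u < a + b \<and> v < a + b \<and> ((u < a) \<noteq> (v < a))"

definition signless_laplacian :: "nat \<Rightarrow> (nat \<Rightarrow> nat \<Rightarrow> bool) \<Rightarrow> real mat" where
  "signless_laplacian n E = mat n n (\<lambda>(i, j).
     (if i = j then real (degree n E i) else 0) + (if E i j then 1 else 0))"

text \<open>Q-eigenvalues with multiplicity (roots of the characteristic polynomial; Q is real
  symmetric, so its characteristic polynomial splits over the reals).\<close>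
definition q_eigenvalues :: "nat \<Rightarrow> (nat \<Rightarrow> nat \<Rightarrow> bool) \<Rightarrow> real multiset" where
  "q_eigenvalues n E = proots (char_poly (signless_laplacian n E))"

definition avg_deg :: "nat \<Rightarrow> (nat \<Rightarrow> nat \<Rightarrow> bool) \<Rightarrow> real" where
  "avg_deg n E = 2 * real (num_edges n E) / real n"

definition QE :: "nat \<Rightarrow> (nat \<Rightarrow> nat \<Rightarrow> bool) \<Rightarrow> real" where
  "QE n E = (\<Sum>q\<in>#q_eigenvalues n E. \<bar>q - avg_deg n E\<bar>)"

text \<open>gamma_1 >= ... >= gamma_n: the numbers |q_i - 2m/n| in nonincreasing order,
  as a list indexed from 0 (gamma_i is entry i - 1).\<close>
definition gammas :: "nat \<Rightarrow> (nat \<Rightarrow> nat \<Rightarrow> bool) \<Rightarrow> real list" where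
  "gammas n E = rev (sort (map (\<lambda>q. \<bar>q - avg_deg n E\<bar>)
                          (sorted_list_of_multiset (q_eigenvalues n E))))"

end

theory Submission
  imports Defs "Jordan_Normal_Form.Schur_Decomposition"
begin

lemma sym_eigen_real:
  fixes M :: "real mat" and a :: complex
  assumes M: "M \<in> carrier_mat n n" and sym: "\<And>i j. i < n \<Longrightarrow> j < n \<Longrightarrow> M $$ (i,j) = M $$ (j,i)"
    and ev: "eigenvalue (map_mat of_real M) a"
  shows "Im a = 0"
proof -
  let ?Mc = "map_mat (of_real :: real \<Rightarrow> complex) M"
  from ev obtain v where v: "eigenvector ?Mc v a" unfolding eigenvalue_def by auto
  hence vc: "v \<in> carrier_vec n" and v0: "v \<noteq> 0\<^sub>v n" and Mv: "?Mc *\<^sub>v v = a \<cdot>\<^sub>v v"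
    using M unfolding eigenvector_def by auto
  have comp: "(\<Sum>j<n. of_real (M $$ (i,j)) * v $ j) = a * v $ i" if "i < n" for i
  proof -
    have "(?Mc *\<^sub>v v) $ i = a * v $ i" using Mv that vc by simp
    moreover have "(?Mc *\<^sub>v v) $ i = (\<Sum>j<n. of_real (M $$ (i,j)) * v $ j)"
      using that vc M by (simp add: scalar_prod_def row_def lessThan_atLeast0)
    ultimately show ?thesis by simp
  qed
  define s where "s = (\<Sum>i<n. \<Sum>j<n. cnj (v $ i) * of_real (M $$ (i,j)) * v $ j)"
  define N where "N = (\<Sum>i<n. cnj (v $ i) * v $ i)"
  have sN: "s = a * N"
  proof -
    have "s = (\<Sum>i<n. cnj (v $ i) * (\<Sum>j<n. of_real (M $$ (i,j)) * v $ j))"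
      unfolding s_def by (simp add: sum_distrib_left mult.assoc)
    also have "\<dots> = (\<Sum>i<n. cnj (v $ i) * (a * v $ i))" using comp by simp
    also have "\<dots> = a * N" unfolding N_def by (simp add: sum_distrib_left algebra_simps)
    finally show ?thesis .
  qed
  have "cnj s = (\<Sum>i<n. \<Sum>j<n. v $ i * of_real (M $$ (i,j)) * cnj (v $ j))"
    unfolding s_def by simp
  also have "\<dots> = (\<Sum>j<n. \<Sum>i<n. v $ i * of_real (M $$ (i,j)) * cnj (v $ j))"
    by (rule sum.swap)
  also have "\<dots> = s" unfolding s_def
    by (intro sum.cong refl, simp add: sym mult.commute mult.left_commute)
  finally have "cnj s = s" .
  hence Ims: "Im s = 0" by (metis cnj.sel(2) neg_equal_zero)
  have NI: "Im N = 0" and NR: "Re N = (\<Sum>i<n. (Re (v $ i))^2 + (Im (v $ i))^2)" unfolding N_def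
    by (simp_all add: Im_sum Re_sum power2_eq_square algebra_simps)
  obtain i where i: "i < n" "v $ i \<noteq> 0" using vc v0 by force
  have "Re N > 0" unfolding NR
  proof (rule sum_pos2[of _ i])
    show "0 < (Re (v $ i))\<^sup>2 + (Im (v $ i))\<^sup>2" using i(2)
      by (metis add.commute add_nonneg_pos complex_eq_iff not_real_square_gt_zero sum_power2_gt_zero_iff zero_complex.simps(1) zero_complex.simps(2))
  qed (use i in auto)
  from arg_cong[OF sN, of Im] Ims NI have "Im a * Re N = 0" by simp
  with \<open>Re N > 0\<close> show ?thesis by simp
qed

lemma sym_real_split:
  fixes M :: "real mat"
  assumes M: "M \<in> carrier_mat n n" and sym: "\<And>i j. i < n \<Longrightarrow> j < n \<Longrightarrow> M $$ (i,j) = M $$ (j,i)"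
  shows "\<exists>es. char_poly M = (\<Prod>e\<leftarrow>es. [:-e, 1:]) \<and> length es = n"
proof -
  let ?Mc = "map_mat (of_real :: real \<Rightarrow> complex) M"
  have Mc: "?Mc \<in> carrier_mat n n" using M by simp
  from char_poly_factorized[OF Mc] obtain as where
    as: "char_poly ?Mc = (\<Prod>a\<leftarrow>as. [:- a, 1:])" "length as = n" by blast
  have re: "a = of_real (Re a)" if "a \<in> set as" for a
  proof -
    have "poly (char_poly ?Mc) a = 0" unfolding as(1) using that by (rule linear_poly_root)
    hence "eigenvalue ?Mc a" using eigenvalue_root_char_poly[OF Mc] by simp
    from sym_eigen_real[OF M sym this] show ?thesis by (simp add: complex_eq_iff)
  qed
  define es where "es = map Re as"
  interpret p: map_poly_inj_comm_ring_hom "of_real :: real \<Rightarrow> complex" ..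
  have "map_poly of_real (char_poly M) = char_poly ?Mc"
    by (rule HOL.sym[OF of_real_hom.char_poly_hom[OF M]])
  also have "\<dots> = (\<Prod>e\<leftarrow>es. [:- of_real e, 1:])"
    unfolding as(1) es_def map_map o_def
    by (rule arg_cong[of _ _ prod_list], rule map_cong[OF refl], subst re, auto)
  also have "\<dots> = map_poly of_real (\<Prod>e\<leftarrow>es. [:-e, 1:])"
    by (simp add: p.hom_prod_list o_def)
  finally have "char_poly M = (\<Prod>e\<leftarrow>es. [:-e, 1:])" by (rule p.injectivity)
  thus ?thesis using as(2) unfolding es_def by (intro exI[of _ "map Re as"]) auto
qed


definition mtrace :: "'a::comm_ring_1 mat \<Rightarrow> 'a" where
  "mtrace M = (\<Sum>i<dim_row M. M $$ (i,i))"

lemma mtrace_comm: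
  fixes A B :: "'a::comm_ring_1 mat"
  assumes A: "A \<in> carrier_mat n m" and B: "B \<in> carrier_mat m n"
  shows "mtrace (A * B) = mtrace (B * A)"
proof -
  have "mtrace (A * B) = (\<Sum>i<n. \<Sum>j<m. A $$ (i,j) * B $$ (j,i))"
    unfolding mtrace_def using A B
    by (auto simp: scalar_prod_def row_def col_def lessThan_atLeast0 intro!: sum.cong)
  also have "\<dots> = (\<Sum>j<m. \<Sum>i<n. B $$ (j,i) * A $$ (i,j))"
    by (subst sum.swap) (simp add: mult.commute)
  also have "\<dots> = mtrace (B * A)"
    unfolding mtrace_def using A B
    by (auto simp: scalar_prod_def row_def col_def lessThan_atLeast0 intro!: sum.cong)
  finally show ?thesis .
qed

lemma ut_mult:
  fixes A B :: "'a::comm_ring_1 mat"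
  assumes A: "A \<in> carrier_mat n n" and B: "B \<in> carrier_mat n n"
    and uA: "upper_triangular A" and uB: "upper_triangular B"
  shows "upper_triangular (A * B) \<and> (\<forall>i<n. (A * B) $$ (i,i) = A $$ (i,i) * B $$ (i,i))"
proof -
  have e: "(A * B) $$ (i,j) = (\<Sum>k\<in>{0..<n}. A $$ (i,k) * B $$ (k,j))" if "i < n" "j < n" for i j
    using that A B by (simp add: scalar_prod_def row_def col_def)
  have z: "A $$ (i,k) * B $$ (k,j) = 0" if "i < n" "j < n" "k < n" "j < i" for i j k
  proof (cases "k < i")
    case True then show ?thesis using uA A that by (auto simp: upper_triangular_def)
  next
    case False then have "j < k" using that by simp
    then show ?thesis using uB B that by (auto simp: upper_triangular_def)
  qed
  have z2: "A $$ (i,k) * B $$ (k,i) = 0" if "i < n" "k < n" "k \<noteq> i" for i k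
  proof (cases "k < i")
    case True then show ?thesis using uA A that by (auto simp: upper_triangular_def)
  next
    case False then have "i < k" using that by simp
    then show ?thesis using uB B that by (auto simp: upper_triangular_def)
  qed
  have "upper_triangular (A * B)"
    unfolding upper_triangular_def
  proof (intro allI impI)
    fix i j assume ij: "i < dim_row (A * B)" "j < i"
    hence i: "i < n" using A by simp
    with ij have j: "j < n" by simp
    show "(A * B) $$ (i, j) = 0" unfolding e[OF i j] using z[OF i j _ ij(2)] by (intro sum.neutral) auto
  qed
  moreover have "(A * B) $$ (i,i) = A $$ (i,i) * B $$ (i,i)" if "i < n" for i
    unfolding e[OF that that] using that
    by (subst sum.remove[of _ i]) (auto simp: z2 intro!: sum.neutral)
  ultimately show ?thesis by blast
qed

lemma ut_pow:
  fixes A :: "'a::comm_ring_1 mat"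
  assumes A: "A \<in> carrier_mat n n" and uA: "upper_triangular A"
  shows "upper_triangular (A ^\<^sub>m k) \<and> (\<forall>i<n. (A ^\<^sub>m k) $$ (i,i) = (A $$ (i,i)) ^ k)"
proof (induct k)
  case 0 then show ?case using A by auto
next
  case (Suc k)
  have Ak: "A ^\<^sub>m k \<in> carrier_mat n n" using A by simp
  from ut_mult[OF Ak A] Suc uA show ?case by simp
qed

lemma power_sum_trace:
  fixes M :: "'a::conjugatable_ordered_field mat"
  assumes M: "M \<in> carrier_mat n n" and cp: "char_poly M = (\<Prod>e\<leftarrow>es. [:-e, 1:])"
  shows "mtrace ((M + (-c) \<cdot>\<^sub>m 1\<^sub>m n) ^\<^sub>m k) = (\<Sum>e\<leftarrow>es. (e - c) ^ k)"
proof -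
  obtain B P Q where sd: "schur_decomposition M es = (B,P,Q)" by (cases "schur_decomposition M es") auto
  from schur_decomposition[OF M cp sd] have
    sw: "similar_mat_wit M B P Q" and uB: "upper_triangular B" and dB: "diag_mat B = es" by auto
  from similar_mat_witD2[OF M sw] have B: "B \<in> carrier_mat n n" and P: "P \<in> carrier_mat n n"
    and Q: "Q \<in> carrier_mat n n" and PQ: "P * Q = 1\<^sub>m n" and QP: "Q * P = 1\<^sub>m n" and MB: "M = P * B * Q" by auto
  define D where "D = (-c) \<cdot>\<^sub>m (1\<^sub>m n :: 'a mat)"
  have D: "D \<in> carrier_mat n n" unfolding D_def by simp
  have "P * (B + D) = P * B + P * D" by (rule mult_add_distrib_mat[OF P B D])
  hence "P * (B + D) * Q = (P * B + P * D) * Q" by simp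
  also have "\<dots> = P * B * Q + P * D * Q"
    by (rule add_mult_distrib_mat[of _ n n], insert P B D Q, auto)
  also have "P * D = (-c) \<cdot>\<^sub>m P" unfolding D_def using P
    using mult_smult_distrib[OF P one_carrier_mat, of "-c"] P by simp
  also have "(-c) \<cdot>\<^sub>m P * Q = (-c) \<cdot>\<^sub>m (P * Q)" by (rule mult_smult_assoc_mat[OF P Q])
  also have "\<dots> = D" unfolding PQ D_def ..
  finally have MD: "M + D = P * (B + D) * Q" using MB by simp
  have sw2: "similar_mat_wit (M + D) (B + D) P Q"
    by (rule similar_mat_witI[OF PQ QP MD], insert M B D P Q, auto)
  have pw: "(M + D) ^\<^sub>m k = P * ((B + D) ^\<^sub>m k) * Q" by (rule similar_mat_wit_pow_id[OF sw2])
  have BD: "B + D \<in> carrier_mat n n" using B D by simp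
  have Bk: "(B + D) ^\<^sub>m k \<in> carrier_mat n n" using BD by simp
  have uBD: "upper_triangular (B + D)" using uB B D unfolding D_def upper_triangular_def by auto
  have "mtrace ((M + D) ^\<^sub>m k) = mtrace (Q * (P * ((B + D) ^\<^sub>m k)))"
    unfolding pw by (rule mtrace_comm[of _ n n], insert P Q Bk, auto)
  also have "Q * (P * ((B + D) ^\<^sub>m k)) = (B + D) ^\<^sub>m k"
    using P Q Bk QP by (simp add: assoc_mult_mat[symmetric, of Q n n P n _ n] left_mult_one_mat[OF Bk])
  also have "mtrace ((B + D) ^\<^sub>m k) = (\<Sum>i<n. (B $$ (i,i) - c) ^ k)"
    unfolding mtrace_def using ut_pow[OF BD uBD, of k] B D unfolding D_def
    by (auto intro!: sum.cong)
  also have "\<dots> = (\<Sum>e\<leftarrow>es. (e - c) ^ k)"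
    unfolding dB[symmetric] diag_mat_def using B
    by (simp add: sum_list_sum_nth lessThan_atLeast0)
  finally show ?thesis unfolding D_def .
qed


lemma proots_lin: "proots (\<Prod>e\<leftarrow>xs. [:-e, 1:]) = mset (xs :: real list)"
proof (induct xs)
  case (Cons a xs)
  have nz: "(\<Prod>e\<leftarrow>xs. [:-e, 1:]) \<noteq> 0" by (auto simp: prod_list_zero_iff)
  have "(\<Prod>e\<leftarrow>a#xs. [:-e, 1:]) = [:-a, 1:] * (\<Prod>e\<leftarrow>xs. [:-e, 1:])" by simp
  also have "proots \<dots> = proots [:-a, 1:] + proots (\<Prod>e\<leftarrow>xs. [:-e, 1:])"
    by (rule proots_mult) (use nz in auto)
  finally show ?case using Cons by simp
qed simp

locale sg =
  fixes n :: nat and E :: "nat \<Rightarrow> nat \<Rightarrow> bool"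
  assumes sg: "simple_graph n E"
begin

definition N :: "nat \<Rightarrow> nat set" where "N i = {j. j < n \<and> E i j}"

abbreviation d :: "nat \<Rightarrow> nat" where "d i \<equiv> degree n E i"

abbreviation Q :: "real mat" where "Q \<equiv> signless_laplacian n E"

lemma E_D: "E u v \<Longrightarrow> u < n \<and> v < n \<and> u \<noteq> v \<and> E v u"
  using sg unfolding simple_graph_def by blast

lemma d_N: "d i = card (N i)" unfolding degree_def N_def ..

lemma N_fin[simp]: "finite (N i)" unfolding N_def by auto

lemma N_sub: "N i \<subseteq> {..<n}" unfolding N_def by auto

lemma d_le: "d i \<le> n" unfolding d_N using card_mono[OF _ N_sub] by auto

lemma Q_carrier: "Q \<in> carrier_mat n n" unfolding signless_laplacian_def by simp

lemma Q_entry: "i < n \<Longrightarrow> j < n \<Longrightarrow>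
  Q $$ (i,j) = (if i = j then real (d i) else 0) + (if E i j then 1 else 0)"
  unfolding signless_laplacian_def by simp

lemma Q_sym: "i < n \<Longrightarrow> j < n \<Longrightarrow> Q $$ (i,j) = Q $$ (j,i)"
  unfolding Q_entry using E_D by auto

lemma sum_N: "(\<Sum>j<n. (if E i j then 1 else 0) * (f :: nat \<Rightarrow> real) j) = (\<Sum>j\<in>N i. f j)"
proof -
  have NN: "N i = {j \<in> {..<n}. E i j}" unfolding N_def by auto
  have "(\<Sum>j\<in>N i. f j) = (\<Sum>j<n. if E i j then f j else 0)" unfolding NN
    by (rule sum.inter_filter) simp
  moreover have "(\<Sum>j<n. (if E i j then 1 else 0) * f j) = (\<Sum>j<n. if E i j then f j else 0)"
    by (rule sum.cong) auto
  ultimately show ?thesis by simp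
qed

lemma Qv_entry:
  assumes v: "v \<in> carrier_vec n" and i: "i < n"
  shows "(Q *\<^sub>v v) $ i = real (d i) * v $ i + (\<Sum>j\<in>N i. v $ j)"
proof -
  have "(Q *\<^sub>v v) $ i = (\<Sum>j<n. Q $$ (i,j) * v $ j)"
    using i v Q_carrier by (simp add: scalar_prod_def row_def lessThan_atLeast0)
  also have "\<dots> = (\<Sum>j<n. (if i = j then real (d i) else 0) * v $ j) + (\<Sum>j<n. (if E i j then 1 else 0) * v $ j)"
    unfolding sum.distrib[symmetric] by (intro sum.cong refl) (simp add: Q_entry i distrib_right)
  also have "(\<Sum>j<n. (if i = j then real (d i) else 0) * v $ j) = real (d i) * v $ i"
  proof -
    have "(\<Sum>j<n. (if i = j then real (d i) else 0) * v $ j) = (\<Sum>j<n. if i = j then real (d i) * v $ j else 0)"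
      by (rule sum.cong) auto
    also have "\<dots> = real (d i) * v $ i" using i by (simp add: sum.delta)
    finally show ?thesis .
  qed
  finally show ?thesis by (simp add: sum_N)
qed

definition es :: "real list" where
  "es = (SOME es. char_poly Q = (\<Prod>e\<leftarrow>es. [:-e, 1:]) \<and> length es = n)"

lemma es: "char_poly Q = (\<Prod>e\<leftarrow>es. [:-e, 1:])" "length es = n"
proof -
  have "\<exists>es. char_poly Q = (\<Prod>e\<leftarrow>es. [:-e, 1:]) \<and> length es = n"
    by (rule sym_real_split[OF Q_carrier Q_sym])
  from someI_ex[OF this] show "char_poly Q = (\<Prod>e\<leftarrow>es. [:-e, 1:])" "length es = n"
    unfolding es_def by auto
qed

lemma q_eig: "q_eigenvalues n E = mset es"
proof -
  have "proots (\<Prod>e\<leftarrow>es. [:-e, 1:]) = mset es" by (rule proots_lin)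
  thus ?thesis unfolding q_eigenvalues_def es(1) .
qed

lemma QE_es: "QE n E = (\<Sum>e\<leftarrow>es. \<bar>e - avg_deg n E\<bar>)"
  unfolding QE_def q_eig by (metis mset_map sum_mset_sum_list)

lemma eigen_eq:
  assumes e: "e \<in> set es"
  shows "\<exists>x. (\<exists>i<n. x i \<noteq> 0) \<and> (\<forall>i<n. e * x i = real (d i) * x i + (\<Sum>j\<in>N i. x j))"
proof -
  have "poly (char_poly Q) e = 0" unfolding es(1) using e by (rule linear_poly_root)
  hence "eigenvalue Q e" using eigenvalue_root_char_poly[OF Q_carrier] by simp
  then obtain v where "eigenvector Q v e" unfolding eigenvalue_def by auto
  hence vc: "v \<in> carrier_vec n" and v0: "v \<noteq> 0\<^sub>v n" and Qv: "Q *\<^sub>v v = e \<cdot>\<^sub>v v"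
    using Q_carrier unfolding eigenvector_def by auto
  obtain i where i: "i < n" "v $ i \<noteq> 0" using vc v0 by force
  show ?thesis
  proof (intro exI[of _ "\<lambda>i. v $ i"] conjI)
    show "\<exists>i<n. v $ i \<noteq> 0" using i by auto
    show "\<forall>i<n. e * v $ i = real (d i) * v $ i + (\<Sum>j\<in>N i. v $ j)"
    proof (intro allI impI)
      fix i assume i: "i < n"
      have "(Q *\<^sub>v v) $ i = e * v $ i" using Qv i vc by simp
      thus "e * v $ i = real (d i) * v $ i + (\<Sum>j\<in>N i. v $ j)" using Qv_entry[OF vc i] by simp
    qed
  qed
qed

end

context sg begin

lemma eig_setup:
  assumes e: "e \<in> set es"
  shows "\<exists>y m i0. i0 < n \<and> m > 0 \<and> y i0 = m \<and> (\<forall>j<n. \<bar>y j\<bar> \<le> m) \<and>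
     (\<forall>i<n. e * y i = real (d i) * y i + (\<Sum>j\<in>N i. y j))"
proof -
  obtain x where x0: "\<exists>i<n. x i \<noteq> 0" and xe: "\<forall>i<n. e * x i = real (d i) * x i + (\<Sum>j\<in>N i. x j)"
    using eigen_eq[OF e] by blast
  have ne: "{..<n} \<noteq> {}" using x0 by auto
  define m where "m = Max ((\<lambda>i. \<bar>x i\<bar>) ` {..<n})"
  have "m \<in> (\<lambda>i. \<bar>x i\<bar>) ` {..<n}" unfolding m_def by (rule Max_in) (use ne in auto)
  then obtain i0 where i0: "i0 < n" "\<bar>x i0\<bar> = m" by auto
  have le: "\<forall>j<n. \<bar>x j\<bar> \<le> m" unfolding m_def by auto
  obtain i1 where i1: "i1 < n" "x i1 \<noteq> 0" using x0 by auto
  have mpos: "m > 0" using le i1 by force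
  show ?thesis
  proof (cases "x i0 > 0")
    case True
    then show ?thesis using i0 le mpos xe by (intro exI[of _ x] exI[of _ m] exI[of _ i0]) auto
  next
    case False
    have "\<forall>i<n. e * (- x i) = real (d i) * (- x i) + (\<Sum>j\<in>N i. - x j)"
      using xe by (simp add: sum_negf)
    then show ?thesis using i0 le mpos False
      by (intro exI[of _ "\<lambda>i. - x i"] exI[of _ m] exI[of _ i0]) auto
  qed
qed

lemma at_max:
  assumes mpos: "m > 0" and le: "\<forall>j<n. \<bar>y j\<bar> \<le> m"
    and ye: "\<forall>i<n. e * y i = real (d i) * y i + (\<Sum>j\<in>N i. y j)"
    and j: "j < n" and yj: "y j = m"
  shows "0 \<le> e \<and> e \<le> 2 * real (d j) \<and> (e = 2 * real (d j) \<longrightarrow> (\<forall>k\<in>N j. y k = m))"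
proof -
  have eq: "e * m = real (d j) * m + (\<Sum>k\<in>N j. y k)" using ye j yj by auto
  have up: "(\<Sum>k\<in>N j. y k) \<le> (\<Sum>k\<in>N j. m)"
    by (rule sum_mono) (use le N_sub in force)
  have lo: "(\<Sum>k\<in>N j. - m) \<le> (\<Sum>k\<in>N j. y k)"
    by (rule sum_mono) (use le N_sub in force)
  have sm: "(\<Sum>k\<in>N j. m) = real (d j) * m" by (simp add: d_N)
  have sm2: "(\<Sum>k\<in>N j. - m) = - (real (d j) * m)" by (simp add: d_N)
  from eq up lo sm sm2 have "e * m \<le> 2 * (real (d j) * m)" "0 \<le> e * m" by linarith+
  hence "e * m \<le> (2 * real (d j)) * m" "0 \<le> e * m" by (simp_all add: mult.assoc)
  hence 1: "e \<le> 2 * real (d j)" "0 \<le> e" using mpos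
    by (simp_all add: zero_le_mult_iff)
  have 2: "\<forall>k\<in>N j. y k = m" if e2: "e = 2 * real (d j)"
  proof -
    from eq e2 sm have "(\<Sum>k\<in>N j. m - y k) = 0" by (simp add: sum_subtractf algebra_simps)
    moreover have "\<forall>k\<in>N j. 0 \<le> m - y k" using le N_sub by force
    ultimately have "\<forall>k\<in>N j. m - y k = 0" using sum_nonneg_eq_0_iff[of "N j" "\<lambda>k. m - y k"] by simp
    thus ?thesis by simp
  qed
  show ?thesis using 1 2 by blast
qed

lemma eig_range:
  assumes e: "e \<in> set es"
  shows "\<exists>j<n. 0 \<le> e \<and> e \<le> 2 * real (d j)"
proof -
  obtain y m i0 where "i0 < n" "m > 0" "y i0 = m" "\<forall>j<n. \<bar>y j\<bar> \<le> m"
     "\<forall>i<n. e * y i = real (d i) * y i + (\<Sum>j\<in>N i. y j)"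
    using eig_setup[OF e] by blast
  with at_max show ?thesis by blast
qed

end

lemma mtrace_mult:
  fixes A B :: "'a::comm_ring_1 mat"
  assumes A: "A \<in> carrier_mat n n" and B: "B \<in> carrier_mat n n"
  shows "mtrace (A * B) = (\<Sum>i<n. \<Sum>j<n. A $$ (i,j) * B $$ (j,i))"
  unfolding mtrace_def using A B
  by (auto simp: scalar_prod_def row_def col_def lessThan_atLeast0 intro!: sum.cong)

lemma mult_entry:
  fixes A B :: "'a::comm_ring_1 mat"
  assumes A: "A \<in> carrier_mat n n" and B: "B \<in> carrier_mat n n" and i: "i < n" and j: "j < n"
  shows "(A * B) $$ (i,j) = (\<Sum>k<n. A $$ (i,k) * B $$ (k,j))"
  using A B i j by (auto simp: scalar_prod_def row_def col_def lessThan_atLeast0 intro!: sum.cong)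

context sg begin

abbreviation Dl where "Dl \<equiv> max_degree n E"
abbreviation dl where "dl \<equiv> min_degree n E"

lemma deg_le_max: "i < n \<Longrightarrow> d i \<le> Dl"
  unfolding max_degree_def by (rule Max_ge) auto

lemma deg_ge_min: "i < n \<Longrightarrow> dl \<le> d i"
  unfolding min_degree_def by (rule Min_le) auto

lemma max_attained: "n > 0 \<Longrightarrow> \<exists>i<n. d i = Dl"
proof -
  assume "n > 0"
  hence "Dl \<in> d ` {0..<n}" unfolding max_degree_def by (intro Max_in) auto
  thus ?thesis by auto
qed

lemma min_attained: "n > 0 \<Longrightarrow> \<exists>i<n. d i = dl"
proof -
  assume "n > 0"
  hence "dl \<in> d ` {0..<n}" unfolding min_degree_def by (intro Min_in) auto
  thus ?thesis by auto
qed

lemma trace2: "(\<Sum>e\<leftarrow>es. (e - c)^2) = (\<Sum>i<n. (real (d i) - c)^2 + real (d i))"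
proof -
  define M where "M = Q + (-c) \<cdot>\<^sub>m 1\<^sub>m n"
  have M: "M \<in> carrier_mat n n" unfolding M_def using Q_carrier by simp
  have Me: "M $$ (i,j) = (if i = j then real (d i) - c else 0) + (if E i j then 1 else 0)"
    if "i < n" "j < n" for i j
    unfolding M_def using that Q_carrier by (auto simp: Q_entry)
  have "(\<Sum>e\<leftarrow>es. (e - c)^2) = mtrace (M ^\<^sub>m 2)"
    unfolding M_def by (rule power_sum_trace[OF Q_carrier es(1), symmetric])
  also have "M ^\<^sub>m 2 = M * M" using M by (simp add: numeral_2_eq_2)
  also have "mtrace (M * M) = (\<Sum>i<n. \<Sum>j<n. M $$ (i,j) * M $$ (j,i))" by (rule mtrace_mult[OF M M])
  also have "\<dots> = (\<Sum>i<n. \<Sum>j<n. (if i = j then (real (d i) - c)^2 else 0) + (if E i j then 1 else 0) * 1)"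
    by (intro sum.cong refl) (auto simp: Me power2_eq_square dest: E_D)
  also have "\<dots> = (\<Sum>i<n. (real (d i) - c)^2 + real (d i))"
  proof (intro sum.cong refl)
    fix i assume "i \<in> {..<n}"
    have "(\<Sum>j<n. if E i j then (1::real) else 0) = real (d i)"
      using sum_N[of i "\<lambda>_. 1"] by (simp add: d_N)
    thus "(\<Sum>j<n. (if i = j then (real (d i) - c)^2 else 0) + (if E i j then 1 else 0) * 1) =
      (real (d i) - c)^2 + real (d i)" using \<open>i \<in> {..<n}\<close> by (simp add: sum.distrib)
  qed
  finally show ?thesis .
qed

lemma handshake: "(\<Sum>i<n. d i) = 2 * num_edges n E"
proof -
  define P where "P = {(u,v). u < n \<and> v < n \<and> E u v}"
  define P1 where "P1 = {(u,v). u < n \<and> v < n \<and> E u v \<and> u < v}"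
  define P2 where "P2 = {(u,v). u < n \<and> v < n \<and> E u v \<and> v < u}"
  define ED where "ED = {{u, v} | u v. u < n \<and> v < n \<and> E u v}"
  have finP: "finite P" unfolding P_def by (rule finite_subset[of _ "{..<n} \<times> {..<n}"]) auto
  have "P = (SIGMA u:{..<n}. N u)" unfolding P_def N_def by auto
  hence "card P = (\<Sum>u<n. card (N u))" by (simp add: card_SigmaI)
  hence cP: "card P = (\<Sum>i<n. d i)" by (simp add: d_N)
  have "P = P1 \<union> P2" unfolding P_def P1_def P2_def by (auto dest: E_D simp: nat_neq_iff)
  moreover have "P1 \<inter> P2 = {}" unfolding P1_def P2_def by auto
  moreover have "finite P1" by (rule finite_subset[OF _ finP]) (auto simp: P1_def P_def)
  moreover have "finite P2" by (rule finite_subset[OF _ finP]) (auto simp: P2_def P_def)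
  ultimately have c12: "card P = card P1 + card P2" by (simp add: card_Un_disjoint)
  have "bij_betw (\<lambda>(u,v). (v,u)) P1 P2"
  proof -
    have "inj_on (\<lambda>(u,v). (v,u)) P1" by (auto simp: inj_on_def)
    moreover have "(\<lambda>(u,v). (v,u)) ` P1 = P2"
    proof
      show "(\<lambda>(u,v). (v,u)) ` P1 \<subseteq> P2"
      proof
        fix x assume "x \<in> (\<lambda>(u,v). (v,u)) ` P1"
        then obtain u v where "x = (v,u)" "u < n" "v < n" "E u v" "u < v" unfolding P1_def by auto
        thus "x \<in> P2" using E_D[of u v] unfolding P2_def by auto
      qed
      show "P2 \<subseteq> (\<lambda>(u,v). (v,u)) ` P1"
      proof
        fix x assume "x \<in> P2"
        then obtain u v where x: "x = (u,v)" "u < n" "v < n" "E u v" "v < u" unfolding P2_def by auto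
        hence "(v,u) \<in> P1" using E_D[of u v] unfolding P1_def by auto
        thus "x \<in> (\<lambda>(u,v). (v,u)) ` P1" using x(1) by (auto intro!: image_eqI[of _ _ "(v,u)"])
      qed
    qed
    ultimately show ?thesis unfolding bij_betw_def by blast
  qed
  hence c2: "card P2 = card P1" by (simp add: bij_betw_same_card)
  have "bij_betw (\<lambda>(u,v). {u,v}) P1 ED"
  proof -
    have "inj_on (\<lambda>(u,v). {u,v}) P1"
      unfolding inj_on_def P1_def by (auto simp: doubleton_eq_iff)
    moreover have "(\<lambda>(u,v). {u,v}) ` P1 = ED"
    proof
      show "(\<lambda>(u,v). {u,v}) ` P1 \<subseteq> ED" unfolding P1_def ED_def by auto
      show "ED \<subseteq> (\<lambda>(u,v). {u,v}) ` P1"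
      proof
        fix x assume "x \<in> ED"
        then obtain u v where x: "x = {u,v}" "u < n" "v < n" "E u v" unfolding ED_def by auto
        have "u \<noteq> v" "E v u" using E_D[OF x(4)] by auto
        show "x \<in> (\<lambda>(u,v). {u,v}) ` P1"
        proof (cases "u < v")
          case True then show ?thesis using x unfolding P1_def by (auto intro!: image_eqI[of _ _ "(u,v)"])
        next
          case False
          hence "v < u" using \<open>u \<noteq> v\<close> by simp
          moreover have "x = {v,u}" using x by auto
          ultimately show ?thesis using x \<open>E v u\<close> unfolding P1_def by (auto intro!: image_eqI[of _ _ "(v,u)"])
        qed
      qed
    qed
    ultimately show ?thesis unfolding bij_betw_def by blast
  qed
  hence "card ED = card P1" by (simp add: bij_betw_same_card)
  thus ?thesis using cP c12 c2 unfolding num_edges_def ED_def[symmetric] by simp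
qed

lemma avg: "n > 0 \<Longrightarrow> avg_deg n E = (\<Sum>i<n. real (d i)) / real n"
  unfolding avg_deg_def using handshake
  by (metis of_nat_mult of_nat_numeral of_nat_sum)

lemma eig_lt:
  assumes conn: "connected_graph n E" and nreg: "\<not> regular n E" and e: "e \<in> set es"
  shows "e < 2 * real Dl"
proof (rule ccontr)
  assume "\<not> e < 2 * real Dl"
  hence ge: "e \<ge> 2 * real Dl" by simp
  obtain y m i0 where i0: "i0 < n" and mpos: "m > 0" and y0: "y i0 = m" and le: "\<forall>j<n. \<bar>y j\<bar> \<le> m"
    and ye: "\<forall>i<n. e * y i = real (d i) * y i + (\<Sum>j\<in>N i. y j)"
    using eig_setup[OF e] by blast
  have at: "e = 2 * real (d j) \<and> (\<forall>k\<in>N j. y k = m)" if "j < n" "y j = m" for j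
  proof -
    from at_max[OF mpos le ye that] have "e \<le> 2 * real (d j)" 
      and imp: "e = 2 * real (d j) \<longrightarrow> (\<forall>k\<in>N j. y k = m)" by auto
    moreover have "d j \<le> Dl" using deg_le_max that by simp
    ultimately have "e = 2 * real (d j)" using ge by linarith
    thus ?thesis using imp by simp
  qed
  have reach: "y j = m" if "E\<^sup>*\<^sup>* i0 j" for j
    using that
  proof (induct rule: rtranclp_induct)
    case base then show ?case using y0 .
  next
    case (step j k)
    have "j < n" using step(2) E_D by blast
    with at step(3) have "\<forall>k\<in>N j. y k = m" by blast
    moreover have "k \<in> N j" using step(2) E_D unfolding N_def by blast
    ultimately show ?case by blast
  qed
  have "\<forall>j<n. real (d j) = real Dl"
  proof (intro allI impI)
    fix j assume j: "j < n"
    have "y j = m" using reach conn i0 j unfolding connected_graph_def by blast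
    hence "e = 2 * real (d j)" using at j by blast
    moreover have "d j \<le> Dl" using deg_le_max j by simp
    ultimately show "real (d j) = real Dl" using ge by linarith
  qed
  hence "regular n E" unfolding regular_def by simp
  with nreg show False ..
qed

end

lemma sum_list_pos_ex:
  fixes f :: "'a \<Rightarrow> real"
  assumes "\<forall>x\<in>set xs. 0 \<le> f x" "y \<in> set xs" "0 < f y"
  shows "0 < (\<Sum>x\<leftarrow>xs. f x)"
  using assms
proof (induct xs)
  case (Cons a xs)
  have nn: "0 \<le> (\<Sum>x\<leftarrow>xs. f x)" using Cons(2) by (intro sum_list_nonneg) auto
  show ?case
  proof (cases "y = a")
    case True then show ?thesis using Cons nn by simp
  next
    case False then show ?thesis using Cons by (simp add: add_nonneg_pos)
  qed
qed simp

lemma two_sq: "(x - y)^2 / 2 \<le> (x - a)^2 + (y - a :: real)^2"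
proof -
  have "(x - a)^2 + (y - a)^2 - (x - y)^2 / 2 = (x + y - 2 * a)^2 / 2"
    by (simp add: power2_eq_square field_simps)
  moreover have "0 \<le> (x + y - 2 * a)^2 / 2" by simp
  ultimately show ?thesis by linarith
qed

context sg begin

theorem nonreg_bound:
  assumes conn: "connected_graph n E" and n2: "n \<ge> 2" and nreg: "\<not> regular n E"
  shows "QE n E > (2 * real (num_edges n E) + (1/2) * (real Dl - real dl)^2)
                  / (2 * real Dl - 2 * real (num_edges n E) / real n)"
proof -
  define a where "a = avg_deg n E"
  define M where "M = 2 * real Dl - a"
  have n0: "n > 0" using n2 by simp
  obtain p where p: "p < n" "d p = Dl" using max_attained n0 by blast
  obtain q where q: "q < n" "d q = dl" using min_attained n0 by blast
  have dlD: "dl < Dl"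
  proof (rule ccontr)
    assume "\<not> dl < Dl"
    have "\<forall>i<n. d i = Dl"
    proof (intro allI impI)
      fix i assume "i < n"
      hence "dl \<le> d i" "d i \<le> Dl" using deg_le_max deg_ge_min by auto
      thus "d i = Dl" using \<open>\<not> dl < Dl\<close> by linarith
    qed
    hence "regular n E" unfolding regular_def by simp
    with nreg show False ..
  qed
  have pq: "p \<noteq> q" using p q dlD by auto
  have a_eq: "a = (\<Sum>i<n. real (d i)) / real n" unfolding a_def using avg[OF n0] .
  have a0: "0 \<le> a" unfolding a_eq by (simp add: sum_nonneg)
  have "(\<Sum>i<n. real (d i)) < (\<Sum>i<n. real Dl)"
    using q dlD by (intro sum_strict_mono_ex1) (auto intro: deg_le_max intro!: bexI[of _ q])
  hence "a < real Dl" unfolding a_eq using n0 by (simp add: divide_less_eq mult.commute)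
  hence aM: "a < M" unfolding M_def by simp
  have gM: "\<bar>e - a\<bar> < M" if "e \<in> set es" for e
  proof -
    have "e < 2 * real Dl" by (rule eig_lt[OF conn nreg that])
    moreover have "0 \<le> e" using eig_range[OF that] by blast
    ultimately have "e - a < M" "a - e < M" using aM a0 unfolding M_def by linarith+
    thus ?thesis by (simp add: abs_less_iff)
  qed
  define S where "S = (\<Sum>e\<leftarrow>es. (e - a)^2)"
  have S_eq: "S = (\<Sum>i<n. (real (d i) - a)^2) + 2 * real (num_edges n E)"
  proof -
    have "(\<Sum>i<n. real (d i)) = real (\<Sum>i<n. d i)" by simp
    also have "\<dots> = 2 * real (num_edges n E)" unfolding handshake by simp
    finally show ?thesis unfolding S_def trace2 sum.distrib by simp
  qed
  have "(\<Sum>i\<in>{p,q}. (real (d i) - a)^2) \<le> (\<Sum>i<n. (real (d i) - a)^2)"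
    by (rule sum_mono2) (use p q in auto)
  hence "(real Dl - a)^2 + (real dl - a)^2 \<le> (\<Sum>i<n. (real (d i) - a)^2)" using pq p q by simp
  hence "(real Dl - real dl)^2 / 2 \<le> (\<Sum>i<n. (real (d i) - a)^2)" using two_sq[of "real Dl" "real dl" a] by linarith
  hence Sge: "2 * real (num_edges n E) + (1/2) * (real Dl - real dl)^2 \<le> S" unfolding S_eq by simp
  have "0 < (1/2) * (real Dl - real dl)^2" using dlD by simp
  hence Spos: "0 < S" using Sge by linarith
  have "M * QE n E - S = (\<Sum>e\<leftarrow>es. \<bar>e - a\<bar> * (M - \<bar>e - a\<bar>))"
    unfolding QE_es S_def a_def[symmetric] sum_list_const_mult[symmetric] sum_list_subtractf[symmetric]
    by (intro arg_cong[of _ _ sum_list] map_cong refl) (simp add: power2_eq_square algebra_simps)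
  also have "\<dots> > 0"
  proof -
    have "\<exists>y\<in>set es. (y - a)^2 > 0"
    proof (rule ccontr)
      assume "\<not> (\<exists>y\<in>set es. (y - a)^2 > 0)"
      hence z: "\<forall>y\<in>set es. (y - a)^2 = 0" by (auto simp: less_le)
      have "S = (\<Sum>e\<leftarrow>es. 0)" unfolding S_def
        by (rule arg_cong[of _ _ sum_list], rule map_cong) (use z in auto)
      with Spos show False by simp
    qed
    then obtain y where y: "y \<in> set es" "(y - a)^2 > 0" by blast
    show ?thesis
    proof (rule sum_list_pos_ex[of _ _ y])
      show "\<forall>x\<in>set es. 0 \<le> \<bar>x - a\<bar> * (M - \<bar>x - a\<bar>)"
      proof
        fix x assume "x \<in> set es"
        hence "\<bar>x - a\<bar> < M" by (rule gM)
        thus "0 \<le> \<bar>x - a\<bar> * (M - \<bar>x - a\<bar>)" by simp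
      qed
      have "\<bar>y - a\<bar> < M" using gM y(1) .
      moreover have "\<bar>y - a\<bar> > 0" using y(2) by simp
      ultimately show "0 < \<bar>y - a\<bar> * (M - \<bar>y - a\<bar>)" by simp
    qed (use y in simp)
  qed
  finally have "S < M * QE n E" by simp
  hence "S / M < QE n E" using aM a0 by (simp add: divide_less_eq mult.commute)
  moreover have "(2 * real (num_edges n E) + (1/2) * (real Dl - real dl)^2) / M \<le> S / M"
    using Sge aM a0 by (intro divide_right_mono) auto
  moreover have "M = 2 * real Dl - 2 * real (num_edges n E) / real n" unfolding M_def a_def avg_deg_def ..
  ultimately show ?thesis by simp
qed

end

locale rg = sg +
  assumes reg: "regular n E" and conn: "connected_graph n E" and n2: "n \<ge> 2"
begin

definition r :: nat where "r = d 0"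

lemma dr: "i < n \<Longrightarrow> d i = r"
proof -
  assume i: "i < n"
  have "0 < n" using n2 by simp
  with reg i show ?thesis unfolding regular_def r_def by blast
qed

lemma r_pos: "r \<ge> 1"
proof -
  have "E\<^sup>*\<^sup>* 0 1" using conn n2 unfolding connected_graph_def by auto
  then obtain x where "E 0 x"
  proof (cases rule: converse_rtranclpE)
    case base then show ?thesis by simp
  next
    case (step y) then show ?thesis using that by blast
  qed
  hence "x \<in> N 0" using E_D unfolding N_def by blast
  hence "N 0 \<noteq> {}" by auto
  hence "d 0 \<noteq> 0" unfolding d_N by simp
  thus ?thesis unfolding r_def by simp
qed

lemma avg_r: "avg_deg n E = real r"
proof -
  have "avg_deg n E = (\<Sum>i<n. real (d i)) / real n" using avg n2 by simp
  also have "\<dots> = (\<Sum>i<n. real r) / real n" using dr by simp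
  also have "\<dots> = real r" using n2 by simp
  finally show ?thesis .
qed

lemma lam_le: "e \<in> set es \<Longrightarrow> \<bar>e - real r\<bar> \<le> real r"
proof -
  assume e: "e \<in> set es"
  obtain j where j: "j < n" "0 \<le> e" "e \<le> 2 * real (d j)" using eig_range[OF e] by blast
  have "d j = r" using dr j(1) .
  thus ?thesis using j by (simp add: abs_le_iff)
qed

lemma QE_r: "QE n E = (\<Sum>e\<leftarrow>es. \<bar>e - real r\<bar>)"
  unfolding QE_es avg_r ..

lemma sum_sq: "(\<Sum>e\<leftarrow>es. (e - real r)^2) = real n * real r"
  unfolding trace2 using dr by simp

lemma key: "real r * QE n E - real n * real r = (\<Sum>e\<leftarrow>es. \<bar>e - real r\<bar> * (real r - \<bar>e - real r\<bar>))"
  unfolding QE_r sum_sq[symmetric] sum_list_const_mult[symmetric] sum_list_subtractf[symmetric]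
  by (intro arg_cong[of _ _ sum_list] map_cong refl) (simp add: power2_eq_square algebra_simps)

lemma key_nonneg: "0 \<le> (\<Sum>e\<leftarrow>es. \<bar>e - real r\<bar> * (real r - \<bar>e - real r\<bar>))"
  by (rule sum_list_nonneg) (use lam_le in auto)

theorem reg_ge: "QE n E \<ge> real n"
proof -
  have "real r * real n \<le> real r * QE n E" using key key_nonneg by (simp add: mult.commute)
  thus ?thesis using r_pos by simp
qed

theorem reg_eq_iff: "QE n E = real n \<longleftrightarrow> (\<forall>e\<in>set es. (e - real r)^2 = 0 \<or> (e - real r)^2 = (real r)^2)"
proof -
  have r0: "real r > 0" using r_pos by simp
  have "QE n E = real n \<longleftrightarrow> real r * QE n E - real n * real r = 0" using r0 by auto
  also have "\<dots> \<longleftrightarrow> (\<forall>e\<in>set es. \<bar>e - real r\<bar> * (real r - \<bar>e - real r\<bar>) = 0)"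
    unfolding key
  proof
    assume s0: "(\<Sum>e\<leftarrow>es. \<bar>e - real r\<bar> * (real r - \<bar>e - real r\<bar>)) = 0"
    show "\<forall>e\<in>set es. \<bar>e - real r\<bar> * (real r - \<bar>e - real r\<bar>) = 0"
    proof (rule ccontr)
      assume "\<not> ?thesis"
      then obtain y where y: "y \<in> set es" "\<bar>y - real r\<bar> * (real r - \<bar>y - real r\<bar>) \<noteq> 0" by blast
      have "\<bar>y - real r\<bar> * (real r - \<bar>y - real r\<bar>) \<ge> 0" using lam_le[OF y(1)] by simp
      with y(2) have "\<bar>y - real r\<bar> * (real r - \<bar>y - real r\<bar>) > 0" by linarith
      hence "0 < (\<Sum>e\<leftarrow>es. \<bar>e - real r\<bar> * (real r - \<bar>e - real r\<bar>))"
        by (intro sum_list_pos_ex[OF _ y(1)]) (use lam_le in auto)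
      with s0 show False by simp
    qed
  next
    assume "\<forall>e\<in>set es. \<bar>e - real r\<bar> * (real r - \<bar>e - real r\<bar>) = 0"
    hence "(\<Sum>e\<leftarrow>es. \<bar>e - real r\<bar> * (real r - \<bar>e - real r\<bar>)) = (\<Sum>e\<leftarrow>es. 0)"
      by (intro arg_cong[of _ _ sum_list] map_cong) auto
    thus "(\<Sum>e\<leftarrow>es. \<bar>e - real r\<bar> * (real r - \<bar>e - real r\<bar>)) = 0" by simp
  qed
  also have "\<dots> \<longleftrightarrow> (\<forall>e\<in>set es. (e - real r)^2 = 0 \<or> (e - real r)^2 = (real r)^2)"
  proof -
    have hx: "\<bar>x\<bar> * (real r - \<bar>x\<bar>) = 0 \<longleftrightarrow> x^2 = 0 \<or> x^2 = (real r)^2" for x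
    proof -
      have "\<bar>x\<bar> * (real r - \<bar>x\<bar>) = 0 \<longleftrightarrow> \<bar>x\<bar> = 0 \<or> \<bar>x\<bar> = real r" by auto
      also have "\<dots> \<longleftrightarrow> x^2 = 0 \<or> x^2 = (real r)^2"
      proof
        assume "\<bar>x\<bar> = 0 \<or> \<bar>x\<bar> = real r"
        thus "x^2 = 0 \<or> x^2 = (real r)^2" by (metis abs_0_eq power2_abs power_zero_numeral)
      next
        assume h: "x^2 = 0 \<or> x^2 = (real r)^2"
        have "\<bar>x\<bar>^2 = x^2" by simp
        with h have "\<bar>x\<bar>^2 = 0 \<or> \<bar>x\<bar>^2 = (real r)^2" by simp
        thus "\<bar>x\<bar> = 0 \<or> \<bar>x\<bar> = real r"
          using power2_eq_iff_nonneg[of "\<bar>x\<bar>" "real r"] by auto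
      qed
      finally show ?thesis .
    qed
    show ?thesis by (simp only: hx)
  qed
  finally show ?thesis .
qed

end

context rg begin

definition Am :: "real mat" where "Am = Q + (- real r) \<cdot>\<^sub>m 1\<^sub>m n"

lemma Am_carrier: "Am \<in> carrier_mat n n" unfolding Am_def using Q_carrier by simp

lemma Am_entry: "i < n \<Longrightarrow> j < n \<Longrightarrow> Am $$ (i,j) = (if E i j then 1 else 0)"
  unfolding Am_def using Q_carrier by (auto simp: Q_entry dr)

definition cc :: "nat \<Rightarrow> nat \<Rightarrow> real" where
  "cc i j = (\<Sum>k<n. (if E i k then 1 else 0) * (if E k j then 1 else 0))"

lemma X_entry: "i < n \<Longrightarrow> j < n \<Longrightarrow> (Am * Am) $$ (i,j) = cc i j"
  unfolding cc_def by (simp add: mult_entry[OF Am_carrier Am_carrier] Am_entry)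

lemma cc_card: "cc i j = real (card (N i \<inter> N j))"
proof -
  have "cc i j = (\<Sum>k\<in>N i. if E k j then 1 else 0)" unfolding cc_def by (rule sum_N)
  also have "\<dots> = (\<Sum>k\<in>N i. if k \<in> N j then 1 else 0)"
    by (intro sum.cong refl) (auto simp: N_def dest: E_D)
  also have "\<dots> = real (card {k \<in> N i. k \<in> N j})"
    by (simp add: sum.inter_filter[symmetric])
  also have "{k \<in> N i. k \<in> N j} = N i \<inter> N j" by auto
  finally show ?thesis .
qed

lemma cc_sym: "cc i j = cc j i" unfolding cc_card by (simp add: Int_commute)

lemma cc_le: "i < n \<Longrightarrow> cc i j \<le> real r"
proof -
  assume i: "i < n"
  have "card (N i \<inter> N j) \<le> card (N i)" by (rule card_mono) auto
  thus ?thesis unfolding cc_card using dr[OF i] d_N[of i] by simp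
qed

lemma cc_nonneg: "0 \<le> cc i j" unfolding cc_card by simp

lemma cc_row: "i < n \<Longrightarrow> (\<Sum>j<n. cc i j) = real r * real r"
proof -
  assume i: "i < n"
  have "(\<Sum>j<n. cc i j) = (\<Sum>j<n. \<Sum>k\<in>N i. if E k j then 1 else 0)"
  proof (intro sum.cong refl)
    fix j show "cc i j = (\<Sum>k\<in>N i. if E k j then 1 else 0)" unfolding cc_def by (rule sum_N)
  qed
  also have "\<dots> = (\<Sum>k\<in>N i. \<Sum>j<n. if E k j then 1 else 0)" by (rule sum.swap)
  also have "\<dots> = (\<Sum>k\<in>N i. real r)"
  proof (intro sum.cong refl)
    fix k assume k: "k \<in> N i"
    have "(\<Sum>j<n. if E k j then (1::real) else 0) = (\<Sum>j<n. (if E k j then 1 else 0) * 1)" by simp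
    also have "\<dots> = real (card (N k))" by (simp only: sum_N) simp
    also have "\<dots> = real r" using dr[of k] d_N[of k] k unfolding N_def by simp
    finally show "(\<Sum>j<n. if E k j then (1::real) else 0) = real r" .
  qed
  also have "\<dots> = real r * real r" using dr[OF i] d_N[of i] by simp
  finally show ?thesis .
qed

lemma trace4: "(\<Sum>e\<leftarrow>es. (e - real r)^4) = (\<Sum>i<n. \<Sum>j<n. (cc i j)^2)"
proof -
  have A: "Am \<in> carrier_mat n n" by (rule Am_carrier)
  have "(\<Sum>e\<leftarrow>es. (e - real r)^4) = mtrace (Am ^\<^sub>m 4)"
    unfolding Am_def by (rule power_sum_trace[OF Q_carrier es(1), symmetric])
  also have "Am ^\<^sub>m 4 = (Am * Am) * (Am * Am)"
  proof -
    have "Am ^\<^sub>m 4 = Am * Am * Am * Am" using A by (simp add: eval_nat_numeral)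
    also have "\<dots> = (Am * Am) * (Am * Am)" using A by (simp add: assoc_mult_mat[of _ n n _ n _ n])
    finally show ?thesis .
  qed
  also have "mtrace ((Am * Am) * (Am * Am)) = (\<Sum>i<n. \<Sum>j<n. (Am * Am) $$ (i,j) * (Am * Am) $$ (j,i))"
    by (rule mtrace_mult) (use A in auto)
  also have "\<dots> = (\<Sum>i<n. \<Sum>j<n. (cc i j)^2)"
  proof (intro sum.cong refl)
    fix i j assume "i \<in> {..<n}" "j \<in> {..<n}"
    thus "(Am * Am) $$ (i,j) * (Am * Am) $$ (j,i) = (cc i j)^2"
      using X_entry cc_sym[of j i] by (simp add: power2_eq_square)
  qed
  finally show ?thesis .
qed

lemma cc_dich:
  assumes H: "\<forall>e\<in>set es. (e - real r)^2 = 0 \<or> (e - real r)^2 = (real r)^2"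
  shows "\<forall>i<n. \<forall>j<n. cc i j = 0 \<or> cc i j = real r"
proof -
  have "(\<Sum>e\<leftarrow>es. (e - real r)^4) = (\<Sum>e\<leftarrow>es. (real r)^2 * (e - real r)^2)"
  proof (intro arg_cong[of _ _ sum_list] map_cong refl)
    fix e assume "e \<in> set es"
    with H have h: "(e - real r)^2 = 0 \<or> (e - real r)^2 = (real r)^2" by blast
    define X where "X = (e - real r)^2"
    have "(e - real r)^4 = X * X" unfolding X_def by (simp add: power2_eq_square eval_nat_numeral)
    moreover have "X * X = (real r)^2 * X" using h unfolding X_def[symmetric] by auto
    ultimately show "(e - real r)^4 = (real r)^2 * (e - real r)^2" unfolding X_def by simp
  qed
  also have "\<dots> = (real r)^2 * (real n * real r)" unfolding sum_list_const_mult sum_sq ..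
  finally have s4: "(\<Sum>i<n. \<Sum>j<n. (cc i j)^2) = (real r)^2 * (real n * real r)" unfolding trace4 .
  have "(\<Sum>i<n. \<Sum>j<n. cc i j * (real r - cc i j)) =
        real r * (\<Sum>i<n. \<Sum>j<n. cc i j) - (\<Sum>i<n. \<Sum>j<n. (cc i j)^2)"
    by (simp add: sum_distrib_left sum_subtractf[symmetric] power2_eq_square algebra_simps)
  also have "(\<Sum>i<n. \<Sum>j<n. cc i j) = (\<Sum>i<n. real r * real r)" by (intro sum.cong refl) (simp add: cc_row)
  finally have z: "(\<Sum>i<n. \<Sum>j<n. cc i j * (real r - cc i j)) = 0"
    unfolding s4 by (simp add: power2_eq_square)
  have nn: "\<forall>i<n. \<forall>j<n. 0 \<le> cc i j * (real r - cc i j)"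
    using cc_nonneg cc_le by simp
  have nn2: "\<forall>i\<in>{..<n}. 0 \<le> (\<Sum>j<n. cc i j * (real r - cc i j))"
    using nn by (auto intro!: sum_nonneg)
  have "\<forall>i\<in>{..<n}. (\<Sum>j<n. cc i j * (real r - cc i j)) = 0"
    using sum_nonneg_eq_0_iff[of "{..<n}" "\<lambda>i. (\<Sum>j<n. cc i j * (real r - cc i j))"] nn2 z by simp
  hence "\<forall>i<n. \<forall>j\<in>{..<n}. cc i j * (real r - cc i j) = 0"
  proof (intro allI impI)
    fix i assume i: "i < n" and h: "\<forall>i\<in>{..<n}. (\<Sum>j<n. cc i j * (real r - cc i j)) = 0"
    show "\<forall>j\<in>{..<n}. cc i j * (real r - cc i j) = 0"
      using sum_nonneg_eq_0_iff[of "{..<n}" "\<lambda>j. cc i j * (real r - cc i j)"] h nn i by simp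
  qed
  thus ?thesis by (metis lessThan_iff mult_eq_0_iff right_minus_eq)
qed

end

context rg begin

lemma to_iso:
  assumes dich: "\<forall>i<n. \<forall>j<n. cc i j = 0 \<or> cc i j = real r"
  shows "even n \<and> graph_iso n E (complete_bipartite (n div 2) (n div 2))"
proof -
  have cardN: "card (N i) = r" if "i < n" for i using dr[OF that] d_N[of i] by simp
  have C: "N i = N j" if ij: "i < n" "j < n" and ne: "N i \<inter> N j \<noteq> {}" for i j
  proof -
    have "card (N i \<inter> N j) \<noteq> 0" using ne by simp
    hence "cc i j \<noteq> 0" unfolding cc_card by simp
    hence cr: "card (N i \<inter> N j) = r" using dich ij unfolding cc_card by auto
    have a1: "N i \<inter> N j = N i" by (rule card_subset_eq) (use cr cardN ij in auto)
    have "N i \<inter> N j = N j" by (rule card_subset_eq) (use cr cardN ij in auto)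
    with a1 show ?thesis by simp
  qed
  have n0: "0 < n" using n2 by simp
  have "N 0 \<noteq> {}" using r_pos cardN[OF n0] by auto
  then obtain s where s: "s \<in> N 0" by auto
  hence Es: "E 0 s" "E s 0" "s < n" using E_D unfolding N_def by auto
  define S where "S = N 0"
  define T where "T = N s"
  have inE: "x \<in> N y \<longleftrightarrow> x < n \<and> E y x" for x y unfolding N_def by simp
  have ST: "N x = T" if "x \<in> S" for x
  proof -
    have x: "x < n" "E 0 x" using that unfolding S_def N_def by auto
    have "0 \<in> N x \<inter> N s" using E_D[OF x(2)] Es n0 by (auto simp: inE)
    thus ?thesis unfolding T_def using C[OF x(1) Es(3)] by blast
  qed
  have TS: "N y = S" if "y \<in> T" for y
  proof -
    have y: "y < n" "E s y" using that unfolding T_def N_def by auto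
    have "s \<in> N y \<inter> N 0" using E_D[OF y(2)] Es by (auto simp: inE)
    thus ?thesis unfolding S_def using C[OF y(1) n0] by blast
  qed
  have disj: "S \<inter> T = {}"
  proof (rule ccontr)
    assume "S \<inter> T \<noteq> {}"
    then obtain x where x: "x \<in> S" "x \<in> T" by auto
    from ST[OF x(1)] TS[OF x(2)] have "S = T" by simp
    with s have "s \<in> N s" unfolding S_def T_def by simp
    thus False using E_D[of s s] by (auto simp: inE)
  qed
  have reach: "v \<in> S \<union> T" if "E\<^sup>*\<^sup>* 0 v" for v
    using that
  proof (induct rule: rtranclp_induct)
    case base
    have "0 \<in> T" unfolding T_def using Es n0 by (simp add: inE)
    thus ?case by simp
  next
    case (step u w)
    have "w \<in> N u" using step(2) E_D[OF step(2)] by (auto simp: inE)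
    moreover have "N u = S \<or> N u = T" using step(3) ST TS by blast
    ultimately show ?case by blast
  qed
  have ST_all: "S \<union> T = {..<n}"
  proof
    show "S \<union> T \<subseteq> {..<n}" unfolding S_def T_def using N_sub by auto
    show "{..<n} \<subseteq> S \<union> T" using reach conn n0 unfolding connected_graph_def by auto
  qed
  have cS: "card S = r" unfolding S_def using cardN n0 by simp
  have cT: "card T = r" unfolding T_def using cardN Es by simp
  have "card (S \<union> T) = card S + card T" using disj by (intro card_Un_disjoint) (auto simp: S_def T_def)
  hence nr: "n = 2 * r" using ST_all cS cT by simp
  have Eiff: "E u v \<longleftrightarrow> ((u \<in> T) \<noteq> (v \<in> T))" if "u < n" "v < n" for u v
  proof (cases "u \<in> T")
    case True
    hence "N u = S" by (rule TS)
    hence "E u v \<longleftrightarrow> v \<in> S" using that by (auto simp: inE)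
    also have "\<dots> \<longleftrightarrow> v \<notin> T" using that ST_all disj by auto
    finally show ?thesis using True by simp
  next
    case False
    hence "u \<in> S" using that ST_all by auto
    hence "N u = T" by (rule ST)
    hence "E u v \<longleftrightarrow> v \<in> T" using that by (auto simp: inE)
    thus ?thesis using False by simp
  qed
  have fT: "finite T" "finite S" unfolding T_def S_def by auto
  obtain g1 where g1: "bij_betw g1 T {0..<r}" using bij_betw_iff_card[of T "{0..<r}"] fT cT by auto
  obtain g2 where g2: "bij_betw g2 S {r..<2*r}" using bij_betw_iff_card[of S "{r..<2*r}"] fT cS by auto
  define f where "f u = (if u \<in> T then g1 u else g2 u)" for u
  have "bij_betw f T {0..<r} = bij_betw g1 T {0..<r}" by (rule bij_betw_cong) (simp add: f_def)
  hence b1: "bij_betw f T {0..<r}" using g1 by simp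
  have "bij_betw f S {r..<2*r} = bij_betw g2 S {r..<2*r}"
  proof (rule bij_betw_cong)
    fix a assume "a \<in> S"
    hence "a \<notin> T" using disj by blast
    thus "f a = g2 a" by (simp add: f_def)
  qed
  hence b2: "bij_betw f S {r..<2*r}" using g2 by simp
  have bc: "bij_betw f (T \<union> S) ({0..<r} \<union> {r..<2*r})"
    by (rule bij_betw_combine[OF b1 b2]) (simp add: ivl_disj_int)
  have e1: "T \<union> S = {0..<n}"
  proof -
    have "T \<union> S = S \<union> T" by blast
    also have "\<dots> = {0..<n}" using ST_all by (simp add: lessThan_atLeast0)
    finally show ?thesis .
  qed
  have e2: "{0..<r} \<union> {r..<2*r} = {0..<n}" using ivl_disj_un_two(3)[of 0 r "2*r"] nr by simp
  have bf: "bij_betw f {0..<n} {0..<n}" using bc unfolding e1 e2 .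
  have fl: "f u < r \<longleftrightarrow> u \<in> T" if "u < n" for u
  proof (cases "u \<in> T")
    case True
    have "g1 u \<in> {0..<r}" by (rule bij_betw_apply[OF g1 True])
    thus ?thesis using True unfolding f_def by simp
  next
    case False
    hence "u \<in> S" using that ST_all by auto
    hence "g2 u \<in> {r..<2*r}" by (rule bij_betw_apply[OF g2])
    thus ?thesis using False unfolding f_def by simp
  qed
  have fn: "f u < n" if "u < n" for u using bij_betw_apply[OF bf] that by simp
  have "graph_iso n E (complete_bipartite (n div 2) (n div 2))"
    unfolding graph_iso_def
  proof (intro exI[of _ f] conjI allI impI)
    show "bij_betw f {0..<n} {0..<n}" by (rule bf)
    fix u v assume u: "u < n" and v: "v < n"
    have h1: "n div 2 = r" using nr by simp
    have h2: "n div 2 + n div 2 = n" using h1 nr by simp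
    from h1 h2 show "E u v \<longleftrightarrow> complete_bipartite (n div 2) (n div 2) (f u) (f v)"
      unfolding complete_bipartite_def using fn[OF u] fn[OF v] fl[OF u] fl[OF v] Eiff[OF u v] by simp
  qed
  moreover have "even n" using nr by (metis dvd_triv_left)
  ultimately show ?thesis by simp
qed

end

context rg begin

lemma from_iso:
  assumes ev: "even n" and iso: "graph_iso n E (complete_bipartite (n div 2) (n div 2))"
  shows "\<forall>e\<in>set es. (e - real r)^2 = 0 \<or> (e - real r)^2 = (real r)^2"
proof -
  define h where "h = n div 2"
  have nh: "n = h + h" unfolding h_def using ev by auto
  obtain f where bf: "bij_betw f {0..<n} {0..<n}"
    and fE: "\<forall>u<n. \<forall>v<n. E u v \<longleftrightarrow> complete_bipartite h h (f u) (f v)"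
    using iso unfolding graph_iso_def h_def by blast
  have fn: "f u < n" if "u < n" for u using bij_betw_apply[OF bf] that by simp
  have Es: "E u v \<longleftrightarrow> ((f u < h) \<noteq> (f v < h))" if "u < n" "v < n" for u v
    using fE that fn[OF that(1)] fn[OF that(2)] nh unfolding complete_bipartite_def by auto
  define P where "P = {j \<in> {0..<n}. f j < h}"
  define P' where "P' = {j \<in> {0..<n}. \<not> f j < h}"
  have injf: "inj_on f {0..<n}" using bf unfolding bij_betw_def by simp
  have imf: "f ` {0..<n} = {0..<n}" using bf unfolding bij_betw_def by simp
  have "f ` P = {0..<h}"
  proof
    show "f ` P \<subseteq> {0..<h}" unfolding P_def by auto
    show "{0..<h} \<subseteq> f ` P"
    proof
      fix y assume y: "y \<in> {0..<h}"
      hence "y \<in> {0..<n}" using nh by simp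
      hence "y \<in> f ` {0..<n}" using imf by simp
      then obtain x where "x \<in> {0..<n}" "y = f x" by blast
      thus "y \<in> f ` P" using y unfolding P_def by auto
    qed
  qed
  moreover have "inj_on f P" using injf unfolding P_def by (rule inj_on_subset) auto
  ultimately have cP: "card P = h" using card_image by fastforce
  have "P \<union> P' = {0..<n}" "P \<inter> P' = {}" unfolding P_def P'_def by auto
  hence "card P + card P' = n" using card_Un_disjoint[of P P'] unfolding P_def P'_def by auto
  hence cP': "card P' = h" using cP nh by simp
  have NP: "N i = (if f i < h then P' else P)" if "i < n" for i
    unfolding N_def P_def P'_def using Es[OF that] by auto
  have dh: "d i = h" if "i < n" for i using NP[OF that] cP cP' d_N[of i] by simp
  have rh: "r = h" using dh[of 0] dr[of 0] n2 by simp
  show ?thesis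
  proof
    fix e assume e: "e \<in> set es"
    obtain x where x0: "\<exists>i<n. x i \<noteq> 0" and xe: "\<forall>i<n. e * x i = real (d i) * x i + (\<Sum>j\<in>N i. x j)"
      using eigen_eq[OF e] by blast
    define l where "l = e - real r"
    define S1 where "S1 = (\<Sum>j\<in>P. x j)"
    define S2 where "S2 = (\<Sum>j\<in>P'. x j)"
    have lx: "l * x i = (if f i < h then S2 else S1)" if "i < n" for i
      using xe that NP[OF that] dh[OF that] rh unfolding l_def S1_def S2_def
      by (auto simp: algebra_simps)
    have "l * S1 = (\<Sum>i\<in>P. l * x i)" unfolding S1_def by (simp add: sum_distrib_left)
    also have "\<dots> = (\<Sum>i\<in>P. S2)" by (intro sum.cong refl) (auto simp: lx P_def)
    finally have L1: "l * S1 = real h * S2" using cP by simp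
    have "l * S2 = (\<Sum>i\<in>P'. l * x i)" unfolding S2_def by (simp add: sum_distrib_left)
    also have "\<dots> = (\<Sum>i\<in>P'. S1)" by (intro sum.cong refl) (auto simp: lx P'_def)
    finally have L2: "l * S2 = real h * S1" using cP' by simp
    show "(e - real r)^2 = 0 \<or> (e - real r)^2 = (real r)^2"
    proof (cases "l = 0")
      case True then show ?thesis unfolding l_def by simp
    next
      case False
      obtain i where i: "i < n" "x i \<noteq> 0" using x0 by blast
      have "S1 \<noteq> 0 \<or> S2 \<noteq> 0" using lx[OF i(1)] False i(2) by (auto split: if_splits)
      moreover have "l * l * S1 = real h * real h * S1" using L1 L2
        by (metis mult.assoc mult.commute)
      moreover have "l * l * S2 = real h * real h * S2" using L1 L2
        by (metis mult.assoc mult.commute)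
      ultimately have "l * l = real h * real h" by auto
      thus ?thesis unfolding l_def rh by (simp add: power2_eq_square)
    qed
  qed
qed

end

theorem mainTheorem11:
  fixes n :: nat and E :: "nat \<Rightarrow> nat \<Rightarrow> bool"
  assumes "simple_graph n E"
    and "connected_graph n E"
    and "n \<ge> 2"
    and "gammas n E ! (n - 1) = 0"
  shows "(\<not> regular n E \<longrightarrow>
            QE n E > (2 * real (num_edges n E)
                       + (1/2) * (real (max_degree n E) - real (min_degree n E))^2)
                     / (2 * real (max_degree n E) - 2 * real (num_edges n E) / real n))
       \<and> (regular n E \<longrightarrow>
            QE n E \<ge> real n
            \<and> (QE n E = real n \<longleftrightarrow>
                 (even n \<and> graph_iso n E (complete_bipartite (n div 2) (n div 2)))))"
proof (intro conjI impI)
  interpret sg n E by (rule sg.intro) (rule assms(1))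
  assume nreg: "\<not> regular n E"
  show "QE n E > (2 * real (num_edges n E)
                       + (1/2) * (real (max_degree n E) - real (min_degree n E))^2)
                     / (2 * real (max_degree n E) - 2 * real (num_edges n E) / real n)"
    by (rule nonreg_bound[OF assms(2) assms(3) nreg])
next
  assume reg: "regular n E"
  interpret rg n E by (rule rg.intro, rule sg.intro, rule assms(1), unfold_locales) (use reg assms in auto)
  show "QE n E \<ge> real n" by (rule reg_ge)
  show "QE n E = real n \<longleftrightarrow> (even n \<and> graph_iso n E (complete_bipartite (n div 2) (n div 2)))"
  proof
    assume "QE n E = real n"
    hence "\<forall>e\<in>set es. (e - real r)^2 = 0 \<or> (e - real r)^2 = (real r)^2" using reg_eq_iff by simp
    from to_iso[OF cc_dich[OF this]] show "even n \<and> graph_iso n E (complete_bipartite (n div 2) (n div 2))" .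
  next
    assume "even n \<and> graph_iso n E (complete_bipartite (n div 2) (n div 2))"
    hence "\<forall>e\<in>set es. (e - real r)^2 = 0 \<or> (e - real r)^2 = (real r)^2" using from_iso by blast
    thus "QE n E = real n" using reg_eq_iff by simp
  qed
qed


end
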